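(* For $n\ge4$ and $0\le k<n$, $$|\mathbf{I}_{n,k}(012)|=|\mathbf{I}_{n-1}(012)|-\sum_{l=1}^{k-1}\sum_{j=0}^{l-1}\sum_{i\ge j}|\mathbf{I}_{n-3,i}(012)|,$$ with initial conditions $|\mathbf{I}_{1,0}(012)|=|\mathbf{I}_{2,0}(012)|=|\mathbf{I}_{2,1}(012)|=|\mathbf{I}_{3,2}(012)|=1$ and $|\mathbf{I}_{3,0}(012)|=|\mathbf{I}_{3,1}(012)|=2$. Equivalently, for $n\ge4$, $$|\mathbf{I}_{n,k}(012)|=|\mathbf{I}_{n-1}(012)|-\sum_{i=0}^{k-3}(i+1)\Big(k-1-\frac i2\Big)|\mathbf{I}_{n-3,i}(012)|-\frac{k(k-1)}{2}\sum_{i=k-2}^{n-4}|\mathbf{I}_{n-3,i}(012)|.$$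
   Context: An inversion sequence of length $n$ is an integer sequence $e=e_1\dots e_n$ with $0\le e_i<i$ for all $i$; $\mathbf{I}_n$ denotes the set of these. $\mathbf{I}_n(012)$ is the set of $e\in\mathbf{I}_n$ with no $i$ such that $e_i<e_{i+1}<e_{i+2}$ (avoiding the consecutive pattern $012$). $\mathbf{I}_{n,k}(012)=\{e\in\mathbf{I}_n(012):e_n=k\}$, empty for $k\ge n$. Empty sums are $0$. *)

theory Defs
  imports Complex_Main
begin

text \<open>Inversion sequences of length n, as lists indexed from 0:
  entry e!j (the paper's e_(j+1)) satisfies 0 <= e!j < j+1.\<close>
definition invseq :: "nat \<Rightarrow> nat list set" where
  "invseq n = {e. length e = n \<and> (\<forall>j<n. e ! j < j + 1)}"

definition avoids012 :: "nat list \<Rightarrow> bool" where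
  "avoids012 e \<longleftrightarrow>
     \<not> (\<exists>i. i + 2 < length e \<and> e ! i < e ! (i+1) \<and> e ! (i+1) < e ! (i+2))"

definition I012 :: "nat \<Rightarrow> nat list set" where
  "I012 n = {e \<in> invseq n. avoids012 e}"

definition I012k :: "nat \<Rightarrow> nat \<Rightarrow> nat list set" where
  "I012k n k = {e \<in> I012 n. 0 < n \<and> e ! (n - 1) = k}"

end

theory Submission
  imports Defs
begin

lemma invseq_Suc: "invseq (Suc n) = (\<Union>e\<in>invseq n. (\<lambda>x. e@[x]) ` {0..<Suc n})"
proof (intro equalityI subsetI)
  fix e assume e: "e \<in> invseq (Suc n)"
  then have l: "length e = Suc n" by (simp add: invseq_def)
  then obtain b x where bx: "e = b @ [x]"
    by (metis length_Suc_conv_rev)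
  have lb: "length b = n" using l bx by simp
  have ev: "\<And>j. j < Suc n \<Longrightarrow> e!j < j+1" using e by (simp add: invseq_def)
  have "\<forall>j<n. b!j < j+1"
  proof (intro allI impI)
    fix j assume "j < n"
    then have "e!j = b!j" using bx lb by (simp add: nth_append)
    then show "b!j < j+1" using ev[of j] \<open>j<n\<close> by simp
  qed
  then have "b \<in> invseq n" using lb by (simp add: invseq_def)
  moreover have "e!n = x" using bx lb nth_append_length[of b x] by simp
  moreover have "x < Suc n" using ev[of n] \<open>e!n = x\<close> by simp
  ultimately show "e \<in> (\<Union>e\<in>invseq n. (\<lambda>x. e@[x]) ` {0..<Suc n})"
    using bx by (intro UN_I[of b]) auto
next
  fix e assume "e \<in> (\<Union>e\<in>invseq n. (\<lambda>x. e@[x]) ` {0..<Suc n})"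
  then show "e \<in> invseq (Suc n)"
    by (auto simp: invseq_def nth_append less_Suc_eq)
qed

lemma invseq_0: "invseq 0 = {[]}" by (auto simp: invseq_def)

lemma finite_invseq: "finite (invseq n)"
  by (induction n) (auto simp: invseq_Suc invseq_0)

lemma finite_I012: "finite (I012 n)"
  using finite_invseq by (simp add: I012_def)

lemma append_I012:
  assumes "length e = p"
  shows "(e@[x] \<in> I012 (Suc p)) \<longleftrightarrow>
    (e \<in> I012 p \<and> x < Suc p \<and> \<not> (2 \<le> p \<and> e!(p-2) < e!(p-1) \<and> e!(p-1) < x))"
proof -
  have inv: "(e@[x] \<in> invseq (Suc p)) \<longleftrightarrow> (e \<in> invseq p \<and> x < Suc p)"
    using assms by (auto simp: invseq_def nth_append less_Suc_eq)
  have av: "avoids012 (e@[x]) \<longleftrightarrow> (avoids012 e \<and> \<not> (2 \<le> p \<and> e!(p-2) < e!(p-1) \<and> e!(p-1) < x))"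
  proof
    assume a: "avoids012 (e@[x])"
    have "avoids012 e"
      unfolding avoids012_def
    proof
      assume "\<exists>i. i + 2 < length e \<and> e ! i < e ! (i+1) \<and> e ! (i+1) < e ! (i+2)"
      then obtain i where i: "i + 2 < length e" "e ! i < e ! (i+1)" "e ! (i+1) < e ! (i+2)" by blast
      have "(e@[x])!i = e!i" "(e@[x])!(i+1) = e!(i+1)" "(e@[x])!(i+2) = e!(i+2)"
        using i(1) by (simp_all add: nth_append)
      moreover have "i + 2 < length (e@[x])" using i(1) by simp
      ultimately have "\<exists>i. i + 2 < length (e@[x]) \<and> (e@[x]) ! i < (e@[x]) ! (i+1) \<and> (e@[x]) ! (i+1) < (e@[x]) ! (i+2)"
        using i by (intro exI[of _ i]) simp
      then show False using a unfolding avoids012_def by simp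
    qed
    moreover have "\<not> (2 \<le> p \<and> e!(p-2) < e!(p-1) \<and> e!(p-1) < x)"
    proof
      assume h: "2 \<le> p \<and> e!(p-2) < e!(p-1) \<and> e!(p-1) < x"
      have "2 \<le> p" using h by blast
      then have "(p-2) + 2 < length (e@[x])" using assms by simp
      moreover have "(e@[x])!(p-2) = e!(p-2)" "(e@[x])!(p-2+1) = e!(p-1)" "(e@[x])!(p-2+2) = x"
      proof -
        obtain q where q: "p = Suc (Suc q)" using h by (metis add_2_eq_Suc le_Suc_ex)
        show "(e@[x])!(p-2) = e!(p-2)" "(e@[x])!(p-2+1) = e!(p-1)" "(e@[x])!(p-2+2) = x"
          using q assms by (simp_all add: nth_append)
      qed
      ultimately have "\<exists>i. i + 2 < length (e@[x]) \<and> (e@[x]) ! i < (e@[x]) ! (i+1) \<and> (e@[x]) ! (i+1) < (e@[x]) ! (i+2)"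
        using h by (intro exI[of _ "p-2"]) simp
      then show False using a unfolding avoids012_def by simp
    qed
    ultimately show "avoids012 e \<and> \<not> (2 \<le> p \<and> e!(p-2) < e!(p-1) \<and> e!(p-1) < x)" by blast
  next
    assume a: "avoids012 e \<and> \<not> (2 \<le> p \<and> e!(p-2) < e!(p-1) \<and> e!(p-1) < x)"
    show "avoids012 (e@[x])"
      unfolding avoids012_def
    proof
      assume "\<exists>i. i + 2 < length (e@[x]) \<and> (e@[x]) ! i < (e@[x]) ! (i+1) \<and> (e@[x]) ! (i+1) < (e@[x]) ! (i+2)"
      then obtain i where i: "i + 2 < length (e@[x])" "(e@[x]) ! i < (e@[x]) ! (i+1)" "(e@[x]) ! (i+1) < (e@[x]) ! (i+2)" by blast
      show False
      proof (cases "i + 2 < p")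
        case True
        have "(e@[x])!i = e!i" "(e@[x])!(i+1) = e!(i+1)" "(e@[x])!(i+2) = e!(i+2)"
          using True assms by (simp_all add: nth_append)
        then have "i + 2 < length e \<and> e ! i < e ! (i+1) \<and> e ! (i+1) < e ! (i+2)"
          using i True assms by simp
        then show ?thesis using a unfolding avoids012_def by blast
      next
        case False
        then have "i + 2 = p" using i assms by simp
        then have ip: "i = p - 2" "i + 1 = p - 1" "2 \<le> p" by auto
        have "(e@[x])!i = e!(p-2)" "(e@[x])!(i+1) = e!(p-1)" "(e@[x])!(i+2) = x"
          using ip \<open>i+2 = p\<close> assms by (simp_all add: nth_append)
        then show ?thesis using i a ip by simp
      qed
    qed
  qed
  show ?thesis using inv av by (auto simp: I012_def)
qed

lemma I012_length: "e \<in> I012 n \<Longrightarrow> length e = n"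
  by (simp add: I012_def invseq_def)

lemma I012_bound: "e \<in> I012 n \<Longrightarrow> j < n \<Longrightarrow> e ! j < j + 1"
  by (simp add: I012_def invseq_def)

lemma I012_split:
  assumes "e \<in> I012 (Suc p)"
  shows "\<exists>b. e = b @ [e!p] \<and> length b = p"
proof -
  have "length e = Suc p" using assms I012_length by blast
  then obtain b x where "e = b @ [x]" by (metis length_Suc_conv_rev)
  then show ?thesis using \<open>length e = Suc p\<close> by auto
qed

lemma card_fiber:
  assumes "finite S" "finite L" "f ` S \<subseteq> L"
  shows "card S = (\<Sum>l\<in>L. card {x\<in>S. f x = l})"
  using sum.group[OF assms, of "\<lambda>_. 1::nat"] by simp

lemma image_append_card:
  "card ((\<lambda>e. e @ [x]) ` A) = card A"
  by (rule card_image) (auto simp: inj_on_def)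

lemma step1:
  assumes "2 \<le> m" "k \<le> m"
  shows "card (I012k (Suc m) k) = card (I012 m) - card {e\<in>I012 m. e!(m-2) < e!(m-1) \<and> e!(m-1) < k}"
proof -
  have eq: "I012k (Suc m) k = (\<lambda>e. e@[k]) ` {e\<in>I012 m. \<not>(e!(m-2) < e!(m-1) \<and> e!(m-1) < k)}"
  proof (intro equalityI subsetI)
    fix e assume e: "e \<in> I012k (Suc m) k"
    then have e1: "e \<in> I012 (Suc m)" "e!m = k" by (auto simp: I012k_def)
    then obtain b where b: "e = b @ [k]" "length b = m" using I012_split by metis
    then show "e \<in> (\<lambda>e. e@[k]) ` {e\<in>I012 m. \<not>(e!(m-2) < e!(m-1) \<and> e!(m-1) < k)}"
      using append_I012[OF b(2), of k] e1 assms by auto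
  next
    fix e assume "e \<in> (\<lambda>e. e@[k]) ` {e\<in>I012 m. \<not>(e!(m-2) < e!(m-1) \<and> e!(m-1) < k)}"
    then obtain b where b: "e = b@[k]" "b \<in> I012 m" "\<not>(b!(m-2) < b!(m-1) \<and> b!(m-1) < k)" by auto
    have "length b = m" using b I012_length by blast
    then show "e \<in> I012k (Suc m) k"
      using append_I012[of b m k] b assms by (auto simp: I012k_def)
  qed
  have "card (I012k (Suc m) k) = card {e\<in>I012 m. \<not>(e!(m-2) < e!(m-1) \<and> e!(m-1) < k)}"
    by (simp add: eq image_append_card)
  also have "{e\<in>I012 m. \<not>(e!(m-2) < e!(m-1) \<and> e!(m-1) < k)} = I012 m - {e\<in>I012 m. e!(m-2) < e!(m-1) \<and> e!(m-1) < k}"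
    by auto
  also have "card \<dots> = card (I012 m) - card {e\<in>I012 m. e!(m-2) < e!(m-1) \<and> e!(m-1) < k}"
    by (rule card_Diff_subset) (auto intro: finite_subset[OF _ finite_I012])
  finally show ?thesis .
qed


lemma step2:
  assumes "2 \<le> q" "k \<le> Suc q"
  shows "card {e\<in>I012 (Suc q). e!(q-1) < e!q \<and> e!q < k}
     = (\<Sum>l\<in>{1..k-1}. card {e\<in>I012 q. e!(q-1) < l \<and> e!(q-1) \<le> e!(q-2)})"
proof -
  let ?S = "{e\<in>I012 (Suc q). e!(q-1) < e!q \<and> e!q < k}"
  have fin: "finite ?S" using finite_I012 by auto
  have "card ?S = (\<Sum>l\<in>{1..k-1}. card {e\<in>?S. e!q = l})"
    by (rule card_fiber[OF fin]) auto
  also have "\<dots> = (\<Sum>l\<in>{1..k-1}. card {e\<in>I012 q. e!(q-1) < l \<and> e!(q-1) \<le> e!(q-2)})"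
  proof (rule sum.cong[OF refl])
    fix l assume l: "l \<in> {1..k-1}"
    have "{e\<in>?S. e!q = l} = (\<lambda>e. e@[l]) ` {e\<in>I012 q. e!(q-1) < l \<and> e!(q-1) \<le> e!(q-2)}"
    proof (intro equalityI subsetI)
      fix e assume e: "e \<in> {e\<in>?S. e!q = l}"
      then obtain b where b: "e = b @ [l]" "length b = q" using I012_split by force
      have "(b@[l])!(q-1) = b!(q-1)" using b assms by (simp add: nth_append)
      then show "e \<in> (\<lambda>e. e@[l]) ` {e\<in>I012 q. e!(q-1) < l \<and> e!(q-1) \<le> e!(q-2)}"
        using append_I012[OF b(2), of l] e b assms by auto
    next
      fix e assume "e \<in> (\<lambda>e. e@[l]) ` {e\<in>I012 q. e!(q-1) < l \<and> e!(q-1) \<le> e!(q-2)}"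
      then obtain b where b: "e = b@[l]" "b \<in> I012 q" "b!(q-1) < l" "b!(q-1) \<le> b!(q-2)" by auto
      have lb: "length b = q" using b I012_length by blast
      have "(b@[l])!(q-1) = b!(q-1)" using lb assms by (simp add: nth_append)
      then show "e \<in> {e\<in>?S. e!q = l}"
        using append_I012[OF lb, of l] b l assms lb by auto
    qed
    then show "card {e\<in>?S. e!q = l} = card {e\<in>I012 q. e!(q-1) < l \<and> e!(q-1) \<le> e!(q-2)}"
      by (simp add: image_append_card)
  qed
  finally show ?thesis .
qed

lemma step3:
  assumes "1 \<le> l"
  shows "card {e\<in>I012 q. e!(q-1) < l \<and> e!(q-1) \<le> e!(q-2)}
     = (\<Sum>j\<in>{0..l-1}. card {e\<in>I012 q. e!(q-1) = j \<and> j \<le> e!(q-2)})"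
proof -
  let ?U = "{e\<in>I012 q. e!(q-1) < l \<and> e!(q-1) \<le> e!(q-2)}"
  have fin: "finite ?U" using finite_I012 by auto
  have "card ?U = (\<Sum>j\<in>{0..l-1}. card {e\<in>?U. e!(q-1) = j})"
    by (rule card_fiber[OF fin]) auto
  also have "\<dots> = (\<Sum>j\<in>{0..l-1}. card {e\<in>I012 q. e!(q-1) = j \<and> j \<le> e!(q-2)})"
    by (rule sum.cong[OF refl]) (rule arg_cong[where f=card], use assms in auto)
  finally show ?thesis .
qed

lemma step4:
  assumes "1 \<le> r" "j \<le> r"
  shows "card {e\<in>I012 (Suc r). e!(Suc r-1) = j \<and> j \<le> e!(Suc r-2)}
     = (\<Sum>i\<in>{j..<r}. card (I012k r i))"
proof -
  let ?W = "{e\<in>I012 r. j \<le> e!(r-1)}"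
  have eq: "{e\<in>I012 (Suc r). e!(Suc r-1) = j \<and> j \<le> e!(Suc r-2)} = (\<lambda>e. e@[j]) ` ?W"
  proof (intro equalityI subsetI)
    fix e assume e: "e \<in> {e\<in>I012 (Suc r). e!(Suc r-1) = j \<and> j \<le> e!(Suc r-2)}"
    then obtain b where b: "e = b @ [j]" "length b = r" using I012_split by force
    have "(b@[j])!(r-1) = b!(r-1)" using b assms by (simp add: nth_append)
    then show "e \<in> (\<lambda>e. e@[j]) ` ?W"
      using append_I012[OF b(2), of j] e b assms by auto
  next
    fix e assume "e \<in> (\<lambda>e. e@[j]) ` ?W"
    then obtain b where b: "e = b@[j]" "b \<in> I012 r" "j \<le> b!(r-1)" by auto
    have lb: "length b = r" using b I012_length by blast
    have "(b@[j])!(r-1) = b!(r-1)" using lb assms by (simp add: nth_append)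
    then show "e \<in> {e\<in>I012 (Suc r). e!(Suc r-1) = j \<and> j \<le> e!(Suc r-2)}"
      using append_I012[OF lb, of j] b assms lb by auto
  qed
  have fin: "finite ?W" using finite_I012 by auto
  have im: "(\<lambda>e. e!(r-1)) ` ?W \<subseteq> {j..<r}"
  proof
    fix x assume "x \<in> (\<lambda>e. e!(r-1)) ` ?W"
    then obtain e where "e \<in> ?W" "x = e!(r-1)" by auto
    moreover have "e!(r-1) < r - 1 + 1" using I012_bound[of e r "r-1"] \<open>e \<in> ?W\<close> assms by auto
    ultimately show "x \<in> {j..<r}" using assms by auto
  qed
  have "card ?W = (\<Sum>i\<in>{j..<r}. card {e\<in>?W. e!(r-1) = i})"
    by (rule card_fiber[OF fin _ im]) auto
  also have "\<dots> = (\<Sum>i\<in>{j..<r}. card (I012k r i))"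
    by (rule sum.cong[OF refl]) (rule arg_cong[where f=card], use assms in \<open>auto simp: I012k_def\<close>)
  finally have "card ?W = (\<Sum>i\<in>{j..<r}. card (I012k r i))" .
  moreover have "card {e\<in>I012 (Suc r). e!(Suc r-1) = j \<and> j \<le> e!(Suc r-2)} = card ?W"
    unfolding eq by (rule image_append_card)
  ultimately show ?thesis by simp
qed


lemma inv1': "invseq (Suc 0) = {[0]}"
  using invseq_Suc[of 0] by (simp add: invseq_0)
lemma inv2': "invseq (Suc (Suc 0)) = {[0,0],[0,1]}"
  using invseq_Suc[of "Suc 0"] by (auto simp: inv1' atLeast0_lessThan_Suc)
lemma inv3': "invseq (Suc (Suc (Suc 0))) = {[0,0,0],[0,0,1],[0,0,2],[0,1,0],[0,1,1],[0,1,2]}"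
  using invseq_Suc[of "Suc (Suc 0)"] by (simp add: inv2' atLeast0_lessThan_Suc insert_commute numeral_2_eq_2)
lemma inv1: "invseq 1 = {[0]}" using inv1' by simp
lemma inv2: "invseq 2 = {[0,0],[0,1]}" using inv2' by (simp add: numeral_2_eq_2)
lemma inv3: "invseq 3 = {[0,0,0],[0,0,1],[0,0,2],[0,1,0],[0,1,1],[0,1,2]}"
  using inv3' by (simp add: numeral_3_eq_3)

lemma avoids_short: "length e \<le> 2 \<Longrightarrow> avoids012 e"
  by (auto simp: avoids012_def)
lemma avoids3: "length e = 3 \<Longrightarrow> avoids012 e \<longleftrightarrow> \<not> (e!0 < e!1 \<and> e!1 < e!2)"
proof -
  assume "length e = 3"
  then have "\<And>i. i + 2 < length e \<longleftrightarrow> i = 0" by auto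
  then show ?thesis unfolding avoids012_def by (simp add: numeral_2_eq_2)
qed

lemma filt_insert: "{e. e \<in> insert a A \<and> P e} = (if P a then insert a {e. e\<in>A \<and> P e} else {e. e\<in>A \<and> P e})"
  by auto
lemma filt_empty: "{e. e \<in> {} \<and> P e} = {}" by auto

lemma I3k: "I012k 3 k = {e. e \<in> {[0,0,0],[0,0,1],[0,0,2],[0,1,0],[0,1,1],[0,1,2]} \<and> (avoids012 e \<and> e!2 = k)}"
  unfolding I012k_def I012_def inv3 by auto

lemma init:
  "card (I012k 1 0) = 1 \<and> card (I012k 2 0) = 1 \<and> card (I012k 2 1) = 1
   \<and> card (I012k 3 2) = 1 \<and> card (I012k 3 0) = 2 \<and> card (I012k 3 1) = 2"
proof -
  have a: "I012k 1 0 = {[0]}" by (auto simp: I012k_def I012_def inv1' avoids_short)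
  have b: "I012k 2 0 = {[0,0]}" by (auto simp: I012k_def I012_def inv2 avoids_short)
  have c: "I012k 2 1 = {[0,1]}" by (auto simp: I012k_def I012_def inv2 avoids_short)
  have d: "I012k 3 2 = {[0,0,2]}" unfolding I3k filt_insert filt_empty by (simp add: avoids3)
  have e: "I012k 3 0 = {[0,0,0],[0,1,0]}" unfolding I3k filt_insert filt_empty by (simp add: avoids3)
  have f: "I012k 3 1 = {[0,0,1],[0,1,1]}" unfolding I3k filt_insert filt_empty by (simp add: avoids3)
  show ?thesis unfolding a b c d e f by simp
qed


lemma inner:
  assumes "1 \<le> l"
  shows "(\<Sum>j\<in>{0..l-1}. if j \<le> i then 1 else 0 :: real) = real (min l (Suc i))"
proof -
  have "(\<Sum>j\<in>{0..l-1}. if j \<le> i then 1 else 0 :: real) = (\<Sum>j\<in>{j\<in>{0..l-1}. j \<le> i}. 1)"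
    by (rule sum.inter_filter[symmetric]) simp
  also have "{j\<in>{0..l-1}. j \<le> i} = {0..min (l-1) i}" by auto
  also have "(\<Sum>j\<in>{0..min (l-1) i}. 1 :: real) = real (min l (Suc i))"
    using assms by simp
  finally show ?thesis .
qed

lemma coef:
  "(\<Sum>l\<in>{1..k-1}. \<Sum>j\<in>{0..l-1}. if j \<le> i then 1 else 0 :: real)
   = (if i < k-2 then (real i+1)*(real k-1-real i/2) else real k*(real k-1)/2)"
proof (induction k)
  case 0
  then show ?case by simp
next
  case (Suc k)
  show ?case
  proof (cases "k = 0")
    case True
    then show ?thesis by simp
  next
    case False
    have set: "{1..Suc k - 1} = insert k {1..k-1}" using False by auto
    have "(\<Sum>l\<in>{1..Suc k-1}. \<Sum>j\<in>{0..l-1}. if j \<le> i then 1 else 0 :: real)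
        = (\<Sum>j\<in>{0..k-1}. if j \<le> i then 1 else 0 :: real) + (\<Sum>l\<in>{1..k-1}. \<Sum>j\<in>{0..l-1}. if j \<le> i then 1 else 0 :: real)"
      unfolding set by (subst sum.insert) auto
    also have "\<dots> = real (min k (Suc i)) + (if i < k-2 then (real i+1)*(real k-1-real i/2) else real k*(real k-1)/2)"
      using inner[of k i] False Suc.IH by simp
    also have "\<dots> = (if i < Suc k-2 then (real i+1)*(real (Suc k)-1-real i/2) else real (Suc k)*(real (Suc k)-1)/2)"
    proof -
      consider "i < k - 2" | "i = k - 2" "2 \<le> k" | "k - 1 \<le> i" by linarith
      then show ?thesis
      proof cases
        case 1
        then have "min k (Suc i) = Suc i" "i < Suc k - 2" by auto
        then show ?thesis using 1 by (simp add: field_simps)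
      next
        case 2
        then have "min k (Suc i) = Suc i" "i < Suc k - 2" "\<not> i < k - 2" by auto
        moreover have "real k = real i + 2" using 2 by auto
        ultimately show ?thesis by (simp add: field_simps)
      next
        case 3
        then have "min k (Suc i) = k" "\<not> i < Suc k - 2" "\<not> i < k - 2" using False by auto
        then show ?thesis by (simp add: field_simps)
      qed
    qed
    finally show ?thesis .
  qed
qed

lemma realid:
  fixes a :: "nat \<Rightarrow> real"
  assumes "1 \<le> R" "k \<le> R + 2"
  shows "(\<Sum>l\<in>{1..k-1}. \<Sum>j\<in>{0..l-1}. \<Sum>i\<in>{j..<R}. a i)
       = (\<Sum>i<k-2. (real i + 1) * (real k - 1 - real i / 2) * a i)
         + real k * (real k - 1) / 2 * (\<Sum>i\<in>{k-2..R-1}. a i)"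
proof -
  define w :: "nat \<Rightarrow> nat \<Rightarrow> real" where "w j i = (if j \<le> i then 1 else 0)" for j i
  define c :: "nat \<Rightarrow> real" where "c i = (if i < k-2 then (real i+1)*(real k-1-real i/2) else real k*(real k-1)/2)" for i
  have s1: "(\<Sum>i\<in>{j..<R}. a i) = (\<Sum>i<R. w j i * a i)" for j
  proof -
    have "(\<Sum>i<R. w j i * a i) = (\<Sum>i<R. if j \<le> i then a i else 0)"
      by (rule sum.cong) (auto simp: w_def)
    also have "\<dots> = sum a {i\<in>{..<R}. j \<le> i}" by (rule sum.inter_filter[symmetric]) simp
    also have "{i\<in>{..<R}. j \<le> i} = {j..<R}" by auto
    finally show ?thesis by simp
  qed
  have "(\<Sum>l\<in>{1..k-1}. \<Sum>j\<in>{0..l-1}. \<Sum>i\<in>{j..<R}. a i)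
      = (\<Sum>l\<in>{1..k-1}. \<Sum>j\<in>{0..l-1}. \<Sum>i<R. w j i * a i)" by (simp add: s1)
  also have "\<dots> = (\<Sum>l\<in>{1..k-1}. \<Sum>i<R. \<Sum>j\<in>{0..l-1}. w j i * a i)"
    by (rule sum.cong[OF refl]) (rule sum.swap)
  also have "\<dots> = (\<Sum>i<R. \<Sum>l\<in>{1..k-1}. \<Sum>j\<in>{0..l-1}. w j i * a i)"
    by (rule sum.swap)
  also have "\<dots> = (\<Sum>i<R. (\<Sum>l\<in>{1..k-1}. \<Sum>j\<in>{0..l-1}. w j i) * a i)"
    by (simp add: sum_distrib_right)
  also have "\<dots> = (\<Sum>i<R. c i * a i)"
    by (rule sum.cong[OF refl]) (simp only: w_def c_def coef)
  also have "{..<R} = {..<k-2} \<union> {k-2..<R}" using assms by auto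
  also have "(\<Sum>i\<in>{..<k-2} \<union> {k-2..<R}. c i * a i) = (\<Sum>i<k-2. c i * a i) + (\<Sum>i\<in>{k-2..<R}. c i * a i)"
    by (rule sum.union_disjoint) auto
  also have "(\<Sum>i<k-2. c i * a i) = (\<Sum>i<k-2. (real i + 1) * (real k - 1 - real i / 2) * a i)"
    by (rule sum.cong) (auto simp: c_def)
  also have "(\<Sum>i\<in>{k-2..<R}. c i * a i) = (\<Sum>i\<in>{k-2..<R}. real k * (real k - 1) / 2 * a i)"
    by (rule sum.cong) (auto simp: c_def)
  also have "\<dots> = real k * (real k - 1) / 2 * (\<Sum>i\<in>{k-2..R-1}. a i)"
  proof -
    have "{k-2..<R} = {k-2..R-1}" using assms by auto
    then show ?thesis by (simp add: sum_distrib_left)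
  qed
  finally show ?thesis .
qed


lemma nested:
  assumes "4 \<le> n" "k < n"
  shows "card (I012k n k) = card (I012 (n-1)) - (\<Sum>l\<in>{1..k-1}. \<Sum>j\<in>{0..l-1}. \<Sum>i\<in>{j..<n-3}. card (I012k (n - 3) i))"
    and "(\<Sum>l\<in>{1..k-1}. \<Sum>j\<in>{0..l-1}. \<Sum>i\<in>{j..<n-3}. card (I012k (n - 3) i)) \<le> card (I012 (n-1))"
proof -
  define r where "r = n - 3"
  have r: "n = Suc (Suc (Suc r))" "1 \<le> r" using assms(1) unfolding r_def by arith+
  let ?S = "{e\<in>I012 (Suc (Suc r)). e!r < e!(Suc r) \<and> e!(Suc r) < k}"
  have s1: "card (I012k n k) = card (I012 (Suc (Suc r))) - card ?S"
    using step1[of "Suc (Suc r)" k] r assms by simp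
  have s2: "card ?S = (\<Sum>l\<in>{1..k-1}. card {e\<in>I012 (Suc r). e!r < l \<and> e!r \<le> e!(r-1)})"
    using step2[of "Suc r" k] r assms by simp
  have s3: "card {e\<in>I012 (Suc r). e!r < l \<and> e!r \<le> e!(r-1)}
      = (\<Sum>j\<in>{0..l-1}. \<Sum>i\<in>{j..<r}. card (I012k r i))" if l: "l \<in> {1..k-1}" for l
  proof -
    have "card {e\<in>I012 (Suc r). e!r < l \<and> e!r \<le> e!(r-1)}
       = (\<Sum>j\<in>{0..l-1}. card {e\<in>I012 (Suc r). e!r = j \<and> j \<le> e!(r-1)})"
      using step3[of l "Suc r"] l by simp
    also have "\<dots> = (\<Sum>j\<in>{0..l-1}. \<Sum>i\<in>{j..<r}. card (I012k r i))"
    proof (rule sum.cong[OF refl])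
      fix j assume "j \<in> {0..l-1}"
      then have "j \<le> r" using l assms r by auto
      then show "card {e\<in>I012 (Suc r). e!r = j \<and> j \<le> e!(r-1)} = (\<Sum>i\<in>{j..<r}. card (I012k r i))"
        using step4[of r j] r by simp
    qed
    finally show ?thesis .
  qed
  have eq: "card ?S = (\<Sum>l\<in>{1..k-1}. \<Sum>j\<in>{0..l-1}. \<Sum>i\<in>{j..<n-3}. card (I012k (n - 3) i))"
    using s2 s3 r by simp
  have le: "card ?S \<le> card (I012 (Suc (Suc r)))"
    by (rule card_mono[OF finite_I012]) auto
  show "card (I012k n k) = card (I012 (n-1)) - (\<Sum>l\<in>{1..k-1}. \<Sum>j\<in>{0..l-1}. \<Sum>i\<in>{j..<n-3}. card (I012k (n - 3) i))"
    using s1 eq r by simp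
  show "(\<Sum>l\<in>{1..k-1}. \<Sum>j\<in>{0..l-1}. \<Sum>i\<in>{j..<n-3}. card (I012k (n - 3) i)) \<le> card (I012 (n-1))"
    using le eq r by simp
qed

theorem mainTheorem14:
  shows "(\<forall>n k. 4 \<le> n \<and> k < n \<longrightarrow>
            int (card (I012k n k)) =
              int (card (I012 (n - 1)))
              - (\<Sum>l\<in>{1..k-1}. \<Sum>j\<in>{0..l-1}. \<Sum>i\<in>{j..<n-3}. int (card (I012k (n - 3) i))))
       \<and> card (I012k 1 0) = 1 \<and> card (I012k 2 0) = 1 \<and> card (I012k 2 1) = 1
       \<and> card (I012k 3 2) = 1 \<and> card (I012k 3 0) = 2 \<and> card (I012k 3 1) = 2
       \<and> (\<forall>n k. 4 \<le> n \<and> k < n \<longrightarrow>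
            real (card (I012k n k)) =
              real (card (I012 (n - 1)))
              - (\<Sum>i<k-2. (real i + 1) * (real k - 1 - real i / 2) * real (card (I012k (n - 3) i)))
              - real k * (real k - 1) / 2 * (\<Sum>i\<in>{k-2..n-4}. real (card (I012k (n - 3) i))))"
proof (intro conjI allI impI)
  fix n k :: nat assume h: "4 \<le> n \<and> k < n"
  then show "int (card (I012k n k)) =
              int (card (I012 (n - 1)))
              - (\<Sum>l\<in>{1..k-1}. \<Sum>j\<in>{0..l-1}. \<Sum>i\<in>{j..<n-3}. int (card (I012k (n - 3) i)))"
    using nested[of n k] by (simp add: of_nat_diff of_nat_sum[symmetric] del: of_nat_sum)
next
  fix n k :: nat assume h: "4 \<le> n \<and> k < n"
  let ?a = "\<lambda>i. real (card (I012k (n - 3) i))"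
  have "real (card (I012k n k)) = real (card (I012 (n - 1)))
      - (\<Sum>l\<in>{1..k-1}. \<Sum>j\<in>{0..l-1}. \<Sum>i\<in>{j..<n-3}. ?a i)"
    using nested[of n k] h by (simp add: of_nat_diff of_nat_sum[symmetric] del: of_nat_sum)
  also have "(\<Sum>l\<in>{1..k-1}. \<Sum>j\<in>{0..l-1}. \<Sum>i\<in>{j..<n-3}. ?a i)
      = (\<Sum>i<k-2. (real i + 1) * (real k - 1 - real i / 2) * ?a i)
         + real k * (real k - 1) / 2 * (\<Sum>i\<in>{k-2..n-3-1}. ?a i)"
    by (rule realid) (use h in auto)
  also have "n - 3 - 1 = n - 4" by simp
  finally show "real (card (I012k n k)) =
              real (card (I012 (n - 1)))
              - (\<Sum>i<k-2. (real i + 1) * (real k - 1 - real i / 2) * real (card (I012k (n - 3) i)))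
              - real k * (real k - 1) / 2 * (\<Sum>i\<in>{k-2..n-4}. real (card (I012k (n - 3) i)))"
    by simp
qed (use init in auto)
end
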